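(* Let $G$ be an lcsc group with Haar measure $m_G$, let $V\subset G$ be a compact symmetric neighbourhood of the identity generating $G$, and let $d_V$ be the associated word metric with balls $B_n=\{g: d_V(e,g)\le n\}=V^n$, $n\in\mathbb{N}$. Assume the doubling condition: there is $C_0$ with $m_G(B_{2n})\le C_0\, m_G(B_n)$ for all integers $n\ge 1$. Then there exist constants $\delta>0$ and $C>0$ such that $m_G(B_{n+1}\setminus B_n)\le C n^{-\delta} m_G(B_n)$ for all integers $n\ge 1$. In particular, the balls are asymptotically invariant under right translations: $\lim_{n\to\infty} m_G(B_ng\,\Delta\, B_n)/m_G(B_n)=0$ for every $g\in G$.
   Context: For a compact symmetric generating set $V$ (i.e. $V=V^{-1}$ and $\bigcup_n V^n=G$), $|g|_V=\min\{n: g\in V^n\}$ with $V^0=\{e\}$ and $V^n$ the set of $n$-fold products of elements of $V$; the word metric is $d_V(g,h)=|g^{-1}h|_V$, which is left-invariant. $\Delta$ denotes symmetric difference. *)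

theory Defs
  imports "HOL-Analysis.Analysis"
begin

text \<open>The group G is modelled as a type of class group_add (which in Isabelle/HOL is NOT
  assumed commutative); the group law is written additively: g + h is the product gh,
  0 the identity e, -g the inverse.\<close>

definition topological_group :: "'a::{group_add,topological_space} itself \<Rightarrow> bool" where
  "topological_group _ \<longleftrightarrow>
     continuous_on UNIV (\<lambda>p::'a \<times> 'a. fst p + snd p) \<and> continuous_on UNIV (uminus :: 'a \<Rightarrow> 'a)"

definition locally_compact_space_type :: "'a::topological_space itself \<Rightarrow> bool" where
  "locally_compact_space_type _ \<longleftrightarrow>
     (\<forall>x::'a. \<exists>U K. open U \<and> compact K \<and> x \<in> U \<and> U \<subseteq> K)"

definition left_haar_measure :: "'a::{group_add,topological_space} measure \<Rightarrow> bool" where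
  "left_haar_measure M \<longleftrightarrow>
     sets M = sets borel \<and>
     (\<forall>A\<in>sets M. \<forall>g. emeasure M ((\<lambda>x. g + x) ` A) = emeasure M A) \<and>
     (\<forall>K. compact K \<longrightarrow> emeasure M K < \<infinity>) \<and>
     (\<forall>U. open U \<and> U \<noteq> {} \<longrightarrow> emeasure M U > 0) \<and>
     (\<forall>A\<in>sets M. emeasure M A = (INF U\<in>{U. open U \<and> A \<subseteq> U}. emeasure M U)) \<and>
     (\<forall>U. open U \<longrightarrow> emeasure M U = (SUP K\<in>{K. compact K \<and> K \<subseteq> U}. emeasure M K))"

fun setpow :: "'a::group_add set \<Rightarrow> nat \<Rightarrow> 'a set" where
  "setpow V 0 = {0}"
| "setpow V (Suc n) = {v + w | v w. v \<in> V \<and> w \<in> setpow V n}"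

definition sym_diff :: "'a set \<Rightarrow> 'a set \<Rightarrow> 'a set" where
  "sym_diff A B = (A - B) \<union> (B - A)"

end

theory Submission imports Defs begin

lemma setpow_add: "setpow V (a+b) = {y + z | y z. y \<in> setpow V a \<and> z \<in> setpow V b}"
proof (induction a)
  case 0 then show ?case by auto
next
  case (Suc a)
  show ?case
  proof (intro set_eqI iffI)
    fix x assume "x \<in> setpow V (Suc a + b)"
    then obtain v w where "v \<in> V" "w \<in> setpow V (a+b)" "x = v + w" by auto
    with Suc obtain y z where "y \<in> setpow V a" "z \<in> setpow V b" "w = y + z" by auto
    moreover have "v + y \<in> setpow V (Suc a)" using \<open>v \<in> V\<close> \<open>y \<in> setpow V a\<close> by auto
    moreover have "x = (v + y) + z" using \<open>x = v + w\<close> \<open>w = y + z\<close> by (simp add: add.assoc)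
    ultimately show "x \<in> {y + z | y z. y \<in> setpow V (Suc a) \<and> z \<in> setpow V b}" by blast
  next
    fix x assume "x \<in> {y + z | y z. y \<in> setpow V (Suc a) \<and> z \<in> setpow V b}"
    then obtain v w z where "v \<in> V" "w \<in> setpow V a" "z \<in> setpow V b" "x = (v + w) + z" by auto
    then show "x \<in> setpow V (Suc a + b)" using Suc by (auto simp: add.assoc)
  qed
qed

lemma setpow_one: "setpow V 1 = V" by auto

lemma setpow_mono_Suc: "0 \<in> V \<Longrightarrow> setpow V n \<subseteq> setpow V (Suc n)"
proof (induction n)
  case 0 then show ?case by force
next
  case (Suc n) then show ?case by (auto 0 3)
qed

lemma setpow_mono: assumes "0 \<in> V" "m \<le> n" shows "setpow V m \<subseteq> setpow V n"
  using assms(2)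
proof (induction n rule: dec_induct)
  case base then show ?case by simp
next
  case (step n) then show ?case using setpow_mono_Suc[OF assms(1), of n] by blast
qed

lemma setpow_uminus: "uminus ` V = V \<Longrightarrow> uminus ` setpow V n = setpow V n"
proof (induction n)
  case 0 then show ?case by auto
next
  case (Suc n)
  have eq: "setpow V (Suc n) = {y + z | y z. y \<in> setpow V n \<and> z \<in> V}"
    using setpow_add[of V n 1] by simp
  have "uminus ` setpow V (Suc n) = {-w + -v | v w. v \<in> V \<and> w \<in> setpow V n}"
  proof (intro set_eqI iffI)
    fix x assume "x \<in> uminus ` setpow V (Suc n)"
    then obtain v w where "v \<in> V" "w \<in> setpow V n" "x = - (v + w)" by auto
    then show "x \<in> {-w + -v | v w. v \<in> V \<and> w \<in> setpow V n}" by (auto simp only: minus_add)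
  next
    fix x assume "x \<in> {-w + -v | v w. v \<in> V \<and> w \<in> setpow V n}"
    then obtain v w where "v \<in> V" "w \<in> setpow V n" "x = -w + -v" by auto
    then have "x = - (v + w)" "v + w \<in> setpow V (Suc n)" by (auto simp only: minus_add setpow.simps)
    then show "x \<in> uminus ` setpow V (Suc n)" by blast
  qed
  also have "\<dots> = {y + z | y z. y \<in> setpow V n \<and> z \<in> V}"
  proof (intro set_eqI iffI)
    fix x assume "x \<in> {-w + -v | v w. v \<in> V \<and> w \<in> setpow V n}"
    then obtain v w where "v \<in> V" "w \<in> setpow V n" "x = -w + -v" by auto
    moreover have "-w \<in> setpow V n" "-v \<in> V" using Suc \<open>v \<in> V\<close> \<open>w \<in> setpow V n\<close> by force+
    ultimately show "x \<in> {y + z | y z. y \<in> setpow V n \<and> z \<in> V}" by blast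
  next
    fix x assume "x \<in> {y + z | y z. y \<in> setpow V n \<and> z \<in> V}"
    then obtain y z where "y \<in> setpow V n" "z \<in> V" "x = y + z" by auto
    moreover have "-y \<in> setpow V n" "-z \<in> V" using Suc \<open>y \<in> setpow V n\<close> \<open>z \<in> V\<close> by force+
    moreover have "x = -(-y) + -(-z)" using \<open>x = y + z\<close> by simp
    ultimately show "x \<in> {-w + -v | v w. v \<in> V \<and> w \<in> setpow V n}" by blast
  qed
  finally show ?case using eq by simp
qed

definition wl :: "'a::group_add set \<Rightarrow> 'a \<Rightarrow> nat" where
  "wl V g = (LEAST n. g \<in> setpow V n)"

locale wg =
  fixes M :: "'a::{group_add, t2_space, second_countable_topology} measure"
    and V :: "'a set" and C0 :: real
  assumes tg: "topological_group TYPE('a)"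
    and haar: "left_haar_measure M"
    and cV: "compact V" and symV: "uminus ` V = V" and int0: "0 \<in> interior V"
    and gen: "(\<Union>n. setpow V n) = UNIV"
    and dbl: "\<forall>n::nat. n \<ge> 1 \<longrightarrow> measure M (setpow V (2*n)) \<le> C0 * measure M (setpow V n)"
begin

abbreviation "B n \<equiv> setpow V n"
abbreviation "l \<equiv> wl V"

lemma zV: "0 \<in> V" using int0 interior_subset by blast

lemma B_mono: "m \<le> n \<Longrightarrow> B m \<subseteq> B n" using setpow_mono zV by blast

lemma ex_B: "\<exists>n. g \<in> B n" using gen by blast

lemma in_B_iff: "g \<in> B n \<longleftrightarrow> l g \<le> n"
proof
  assume "g \<in> B n" then show "l g \<le> n" unfolding wl_def by (rule Least_le)
next
  assume "l g \<le> n"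
  have "g \<in> B (l g)" unfolding wl_def using ex_B by (rule LeastI_ex)
  then show "g \<in> B n" using B_mono[OF \<open>l g \<le> n\<close>] by blast
qed

lemma l_in: "g \<in> B (l g)" using in_B_iff by simp

lemma l_zero[simp]: "l 0 = 0" using in_B_iff[of 0 0] by simp

lemma l_uminus[simp]: "l (-g) = l g"
proof -
  have "\<And>g. l (-g) \<le> l g"
  proof -
    fix g
    have "-g \<in> uminus ` B (l g)" using l_in by blast
    then have "-g \<in> B (l g)" using setpow_uminus[OF symV] by simp
    then show "l (-g) \<le> l g" using in_B_iff by blast
  qed
  from this[of g] this[of "-g"] show ?thesis by simp
qed

lemma l_add: "l (a + b) \<le> l a + l b"
proof -
  have "a + b \<in> B (l a + l b)" unfolding setpow_add using l_in by blast
  then show ?thesis using in_B_iff by blast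
qed

lemma l_geod:
  assumes "k \<le> l x"
  shows "\<exists>y. l y = k \<and> l (-y + x) = l x - k"
proof -
  have "x \<in> B (k + (l x - k))" using l_in assms by simp
  then obtain y z where yz: "y \<in> B k" "z \<in> B (l x - k)" "x = y + z" unfolding setpow_add by blast
  then have z: "z = -y + x" by (simp add: add.assoc[symmetric])
  have "l y \<le> k" "l z \<le> l x - k" using yz in_B_iff by auto
  moreover have "l x \<le> l y + l z" using l_add yz by simp
  ultimately show ?thesis using z assms by (intro exI[of _ y]) auto
qed

lemma l_dist_tri: "l (-x + z) \<le> l (-x + y) + l (-y + z)"
proof -
  have "-x + z = (-x + y) + (-y + z)" by (simp add: add.assoc[symmetric])
  then show ?thesis using l_add by metis
qed

lemma l_dist_sym: "l (-x + y) = l (-y + x)"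
  by (metis l_uminus minus_add minus_minus)

lemma l_tri2: "l y \<le> l x + l (-x + y)"
  using l_dist_tri[of 0 y x] by simp

lemma cont_add: "continuous_on UNIV (\<lambda>p::'a \<times> 'a. fst p + snd p)"
  using tg unfolding topological_group_def by blast

lemma cont_left: "continuous_on UNIV (\<lambda>y::'a. x + y)"
proof -
  have "continuous_on UNIV ((\<lambda>p::'a \<times> 'a. fst p + snd p) \<circ> (\<lambda>y. (x, y)))"
    by (rule continuous_on_compose) (auto intro!: continuous_intros continuous_on_subset[OF cont_add])
  then show ?thesis by (simp add: o_def)
qed

lemma cont_right: "continuous_on UNIV (\<lambda>y::'a. y + x)"
proof -
  have "continuous_on UNIV ((\<lambda>p::'a \<times> 'a. fst p + snd p) \<circ> (\<lambda>y. (y, x)))"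
    by (rule continuous_on_compose) (auto intro!: continuous_intros continuous_on_subset[OF cont_add])
  then show ?thesis by (simp add: o_def)
qed

lemma compact_B: "compact (B n)"
proof (induction n)
  case 0 then show ?case by simp
next
  case (Suc n)
  have "B (Suc n) = (\<lambda>p. fst p + snd p) ` (V \<times> B n)" by force
  moreover have "compact ((\<lambda>p. fst p + snd p) ` (V \<times> B n))"
    by (rule compact_continuous_image) (auto intro: continuous_on_subset[OF cont_add] compact_Times cV Suc)
  ultimately show ?case by simp
qed

lemmas H = haar[unfolded left_haar_measure_def]
lemma sets_M: "sets M = sets borel" using H by (rule conjunct1)

lemma compact_sets: "compact K \<Longrightarrow> K \<in> sets M"
  by (simp add: sets_M borel_closed compact_imp_closed)

lemma compact_fin: "compact K \<Longrightarrow> emeasure M K < \<infinity>"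
  using H[THEN conjunct2, THEN conjunct2, THEN conjunct1] by blast

lemma compact_fmeas: "compact K \<Longrightarrow> K \<in> fmeasurable M"
  by (rule fmeasurableI[OF compact_sets compact_fin])

lemma left_inv: "A \<in> sets M \<Longrightarrow> emeasure M ((\<lambda>x. g + x) ` A) = emeasure M A"
  using H[THEN conjunct2, THEN conjunct1] by blast

lemma compact_left: "compact (K::'a set) \<Longrightarrow> compact ((\<lambda>y. x + y) ` K)"
proof -
  assume K: "compact K"
  have "continuous_on K (\<lambda>y. x + y)" by (rule continuous_on_subset[OF cont_left subset_UNIV])
  then show ?thesis by (rule compact_continuous_image[OF _ K])
qed

lemma compact_right: "compact (K::'a set) \<Longrightarrow> compact ((\<lambda>y. y + x) ` K)"
proof -
  assume K: "compact K"
  have "continuous_on K (\<lambda>y. y + x)" by (rule continuous_on_subset[OF cont_right subset_UNIV])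
  then show ?thesis by (rule compact_continuous_image[OF _ K])
qed

lemma measure_left: "compact (K::'a set) \<Longrightarrow> measure M ((\<lambda>y. x + y) ` K) = measure M K"
  unfolding measure_def using left_inv compact_sets by simp

definition "Bl x r = (\<lambda>y. x + y) ` B r"

lemma Bl_eq: "Bl x r = {z. l (-x + z) \<le> r}"
proof (intro set_eqI iffI)
  fix z assume "z \<in> Bl x r"
  then obtain y where "y \<in> B r" "z = x + y" unfolding Bl_def by auto
  then show "z \<in> {z. l (-x + z) \<le> r}" using in_B_iff by (simp add: add.assoc[symmetric])
next
  fix z assume "z \<in> {z. l (-x + z) \<le> r}"
  then have "-x + z \<in> B r" using in_B_iff by simp
  moreover have "z = x + (-x + z)" by (simp add: add.assoc[symmetric])
  ultimately show "z \<in> Bl x r" unfolding Bl_def by blast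
qed

lemma Bl_compact: "compact (Bl x r)" unfolding Bl_def by (rule compact_left[OF compact_B])

lemma Bl_measure: "measure M (Bl x r) = measure M (B r)"
  unfolding Bl_def by (rule measure_left[OF compact_B])

lemma B_fmeas: "B n \<in> fmeasurable M" by (rule compact_fmeas[OF compact_B])

lemma B_sets: "B n \<in> sets M" by (rule compact_sets[OF compact_B])

lemma B_measure_mono: "m \<le> n \<Longrightarrow> measure M (B m) \<le> measure M (B n)"
  by (rule measure_mono_fmeasurable[OF B_mono B_sets B_fmeas])

lemma B_pos: assumes "n \<ge> 1" shows "measure M (B n) > 0"
proof -
  have "emeasure M (interior V) > 0" using H[THEN conjunct2, THEN conjunct2, THEN conjunct2, THEN conjunct1] int0 by blast
  moreover have "interior V \<subseteq> B n" using B_mono[OF assms] interior_subset by fastforce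
  ultimately have "emeasure M (B n) > 0"
    using emeasure_mono[of "interior V" "B n" M] B_sets by (metis order_less_le_trans)
  then show ?thesis using B_fmeas emeasure_eq_measure2 by (metis ennreal_less_zero_iff)
qed

lemma C0_ge1: "C0 \<ge> 1"
proof -
  have "measure M (B 1) \<le> measure M (B 2)" by (rule B_measure_mono) simp
  also have "\<dots> \<le> C0 * measure M (B 1)" using dbl[rule_format, of 1] by simp
  finally show ?thesis using B_pos[of 1] by simp
qed

lemma dbl_pow: assumes "n \<ge> 1" "m \<le> 2^j * n" shows "measure M (B m) \<le> C0^j * measure M (B n)"
  using assms(2)
proof (induction j arbitrary: m)
  case 0 then show ?case using B_measure_mono by simp
next
  case (Suc j)
  have "measure M (B m) \<le> measure M (B (2 * (2^j * n)))" using Suc.prems by (intro B_measure_mono) simp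
  also have "\<dots> \<le> C0 * measure M (B (2^j * n))" using dbl assms(1) by simp
  also have "\<dots> \<le> C0 * (C0^j * measure M (B n))" using Suc.IH[of "2^j*n"] C0_ge1 by simp
  finally show ?case by simp
qed

lemma Bl_sets: "Bl x r \<in> sets M" by (rule compact_sets[OF Bl_compact])
lemma Bl_fmeas: "Bl x r \<in> fmeasurable M" by (rule compact_fmeas[OF Bl_compact])

lemma shell:
  assumes s3: "3 \<le> s" and sn: "s \<le> n"
  shows "measure M (B (n+s) - B n) \<le> C0^4 * measure M (B n - B (n-s))"
proof -
  define rr where "rr = (s - 1) div 2"
  define R where "R = 2* s + 4*rr + 1"
  define T where "T = B (n+s) - B n"
  define I where "I = B n - B (n-s)"
  have r1: "1 \<le> rr" and r2: "2*rr \<le> s - 1" and r3: "s \<le> 2*rr + 2" and r4: "rr \<le> n"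
    using s3 sn unfolding rr_def by auto
  have RR: "R \<le> 2^4 * rr" using r1 r3 unfolding R_def by simp
  define sep where "sep F \<longleftrightarrow> (\<forall>x\<in>F. \<forall>x'\<in>F. x \<noteq> x' \<longrightarrow> R \<le> l (-x + x'))" for F
  have T_sets: "T \<in> sets M" unfolding T_def using B_sets by blast
  have I_sets: "I \<in> sets M" unfolding I_def using B_sets by blast
  have I_fmeas: "I \<in> fmeasurable M" unfolding I_def
    using fmeasurableI2[OF B_fmeas[of n]] I_sets[unfolded I_def] by blast
  have Bpos: "measure M (B rr) > 0" using B_pos r1 by simp
  have cardb: "real (card F) * measure M (B rr) \<le> measure M (B (n+s+rr))"
    if F: "finite F" "F \<subseteq> T" "sep F" for F
  proof -
    have disj: "pairwise (\<lambda>i j. disjnt (Bl i rr) (Bl j rr)) F"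
    proof (rule pairwiseI)
      fix x x' assume xx: "x \<in> F" "x' \<in> F" "x \<noteq> x'"
      show "disjnt (Bl x rr) (Bl x' rr)"
      proof (rule ccontr)
        assume "\<not> disjnt (Bl x rr) (Bl x' rr)"
        then obtain z where z: "l (-x + z) \<le> rr" "l (-x' + z) \<le> rr"
          unfolding disjnt_def Bl_eq by blast
        have "l (-x + x') \<le> l (-x + z) + l (-z + x')" by (rule l_dist_tri)
        also have "\<dots> \<le> 2 * rr" using z l_dist_sym[of z x'] by simp
        finally show False using xx F(3) unfolding sep_def R_def by fastforce
      qed
    qed
    have "measure M (\<Union>x\<in>F. Bl x rr) = (\<Sum>x\<in>F. measure M (Bl x rr))"
      by (rule measure_UNION'[OF F(1) Bl_fmeas disj])
    also have "\<dots> = real (card F) * measure M (B rr)" using Bl_measure by simp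
    finally have eq: "measure M (\<Union>x\<in>F. Bl x rr) = real (card F) * measure M (B rr)" .
    have "(\<Union>x\<in>F. Bl x rr) \<subseteq> B (n+s+rr)"
    proof
      fix z assume "z \<in> (\<Union>x\<in>F. Bl x rr)"
      then obtain x where x: "x \<in> F" "l (-x + z) \<le> rr" unfolding Bl_eq by blast
      have "l x \<le> n + s" using x F(2) in_B_iff unfolding T_def by blast
      then show "z \<in> B (n+s+rr)" using l_tri2[of z x] x in_B_iff by simp
    qed
    then have "measure M (\<Union>x\<in>F. Bl x rr) \<le> measure M (B (n+s+rr))"
      by (intro measure_mono_fmeasurable B_fmeas sets.finite_UN F(1) Bl_sets) auto
    then show ?thesis using eq by simp
  qed
  define N where "N = nat \<lceil>measure M (B (n+s+rr)) / measure M (B rr)\<rceil>"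
  have cardN: "card F \<le> N" if "finite F" "F \<subseteq> T" "sep F" for F
  proof -
    have "real (card F) \<le> measure M (B (n+s+rr)) / measure M (B rr)"
      using cardb[OF that] Bpos by (simp add: field_simps)
    then show ?thesis unfolding N_def by linarith
  qed
  have P0: "\<exists>F. finite F \<and> F \<subseteq> T \<and> sep F \<and> card F = 0"
    by (rule exI[of _ "{}"]) (simp add: sep_def)
  have bnd: "\<forall>c. (\<exists>F. finite F \<and> F \<subseteq> T \<and> sep F \<and> card F = c) \<longrightarrow> c \<le> N"
    using cardN by blast
  obtain c where c: "\<exists>F. finite F \<and> F \<subseteq> T \<and> sep F \<and> card F = c"
    and cmax: "\<And>c'. (\<exists>F. finite F \<and> F \<subseteq> T \<and> sep F \<and> card F = c') \<Longrightarrow> c' \<le> c"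
    using Nat.ex_has_greatest_nat[OF P0 bnd] by blast
  then obtain F where F: "finite F" "F \<subseteq> T" "sep F" "card F = c" by blast
  have cover: "T \<subseteq> (\<Union>x\<in>F. Bl x R)"
  proof
    fix z assume zT: "z \<in> T"
    show "z \<in> (\<Union>x\<in>F. Bl x R)"
    proof (rule ccontr)
      assume nc: "z \<notin> (\<Union>x\<in>F. Bl x R)"
      then have far: "\<And>x. x \<in> F \<Longrightarrow> R < l (-x + z)" unfolding Bl_eq by force
      have zF: "z \<notin> F" using far[of z] by auto
      have "sep (insert z F)" using F(3) far l_dist_sym unfolding sep_def
        by (metis insert_iff less_imp_le_nat)
      moreover have "card (insert z F) = c + 1" using F zF by simp
      ultimately have "c + 1 \<le> c" using cmax[of "c+1"] F zT by blast
      then show False by simp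
    qed
  qed
  have "measure M T \<le> measure M (\<Union>x\<in>F. Bl x R)"
    by (intro measure_mono_fmeasurable cover T_sets sets.finite_UN F(1) Bl_sets fmeasurable.finite_UN Bl_fmeas)
  also have "\<dots> \<le> (\<Sum>x\<in>F. measure M (Bl x R))"
    by (rule measure_UNION_le[OF F(1) Bl_sets])
  also have "\<dots> = real (card F) * measure M (B R)" using Bl_measure by simp
  also have "\<dots> \<le> real (card F) * (C0^4 * measure M (B rr))"
    using dbl_pow[OF r1 RR] by (intro mult_left_mono) auto
  finally have Tb: "measure M T \<le> C0^4 * (real (card F) * measure M (B rr))" by (simp add: algebra_simps)
  have "\<forall>x\<in>F. \<exists>y. l y = n - rr \<and> l (-y + x) = l x - (n - rr)"
  proof
    fix x assume "x \<in> F"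
    then have "n < l x" using F(2) in_B_iff unfolding T_def by force
    then show "\<exists>y. l y = n - rr \<and> l (-y + x) = l x - (n - rr)" by (intro l_geod) simp
  qed
  then obtain y where y: "\<And>x. x \<in> F \<Longrightarrow> l (y x) = n - rr \<and> l (-(y x) + x) = l x - (n - rr)"
    by metis
  have dxy: "l (-(y x) + x) \<le> s + rr" "l (-x + y x) \<le> s + rr" if "x \<in> F" for x
  proof -
    have "l x \<le> n + s" using that F(2) in_B_iff unfolding T_def by blast
    then show "l (-(y x) + x) \<le> s + rr" using y[OF that] by simp
    then show "l (-x + y x) \<le> s + rr" using l_dist_sym by simp
  qed
  have disj: "pairwise (\<lambda>i j. disjnt (Bl (y i) rr) (Bl (y j) rr)) F"
  proof (rule pairwiseI)
    fix x x' assume xx: "x \<in> F" "x' \<in> F" "x \<noteq> x'"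
    show "disjnt (Bl (y x) rr) (Bl (y x') rr)"
    proof (rule ccontr)
      assume "\<not> disjnt (Bl (y x) rr) (Bl (y x') rr)"
      then obtain z where z: "l (-(y x) + z) \<le> rr" "l (-(y x') + z) \<le> rr"
        unfolding disjnt_def Bl_eq by blast
      have "l (-x + x') \<le> l (-x + y x) + l (-(y x) + x')" by (rule l_dist_tri)
      also have "l (-(y x) + x') \<le> l (-(y x) + z) + l (-z + x')" by (rule l_dist_tri)
      also have "l (-z + x') \<le> l (-z + y x') + l (-(y x') + x')" by (rule l_dist_tri)
      finally have "l (-x + x') \<le> l (-x + y x) + (l (-(y x) + z) + (l (-z + y x') + l (-(y x') + x')))"
        by simp
      moreover have "l (-z + y x') \<le> rr" using z l_dist_sym[of z "y x'"] by simp
      ultimately have "l (-x + x') \<le> 2* s + 4*rr" using z dxy[OF xx(1)] dxy[OF xx(2)] by simp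
      then show False using xx F(3) unfolding sep_def R_def by fastforce
    qed
  qed
  have sub: "(\<Union>x\<in>F. Bl (y x) rr) \<subseteq> I"
  proof
    fix z assume "z \<in> (\<Union>x\<in>F. Bl (y x) rr)"
    then obtain x where x: "x \<in> F" "l (-(y x) + z) \<le> rr" unfolding Bl_eq by blast
    have a: "l z \<le> l (y x) + l (-(y x) + z)" by (rule l_tri2)
    have b: "l (y x) \<le> l z + l (-z + y x)" by (rule l_tri2)
    have "l (-z + y x) \<le> rr" using x(2) l_dist_sym by simp
    then have "l z \<le> n" "n - s < l z" using a b conjunct1[OF y[OF x(1)]] x(2) r2 r4 s3 sn by linarith+
    then show "z \<in> I" unfolding I_def using in_B_iff by simp
  qed
  have "real (card F) * measure M (B rr) = (\<Sum>x\<in>F. measure M (Bl (y x) rr))"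
    using Bl_measure by simp
  also have "\<dots> = measure M (\<Union>x\<in>F. Bl (y x) rr)"
    by (rule measure_UNION'[symmetric, OF F(1) Bl_fmeas disj])
  also have "\<dots> \<le> measure M I"
    by (rule measure_mono_fmeasurable[OF sub sets.finite_UN[OF F(1) Bl_sets] I_fmeas])
  finally have "real (card F) * measure M (B rr) \<le> measure M I" .
  then have "C0^4 * (real (card F) * measure M (B rr)) \<le> C0^4 * measure M I"
    using C0_ge1 by (intro mult_left_mono) auto
  with Tb show ?thesis unfolding T_def I_def by linarith
qed

lemma Bdiff: "m \<le> n \<Longrightarrow> measure M (B n - B m) = measure M (B n) - measure M (B m)"
  using B_fmeas[of n] B_sets B_mono by (intro measure_Diff) (auto simp: fmeasurable_def)

definition "\<theta> = C0^4 / (C0^4 + 1)"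

lemma theta_pos: "0 < \<theta>" and theta_less1: "\<theta> < 1"
proof -
  have "C0^4 \<ge> 1" using C0_ge1 by simp
  then show "0 < \<theta>" "\<theta> < 1" unfolding \<theta>_def by (auto simp: field_simps)
qed

lemma shell2:
  assumes "3 \<le> s" "s \<le> n"
  shows "measure M (B (n+s) - B n) \<le> \<theta> * measure M (B (n+s) - B (n-s))"
proof -
  define K where "K = C0^4"
  have K: "K \<ge> 1" unfolding K_def using C0_ge1 by simp
  have a: "measure M (B (n+s) - B n) \<le> K * measure M (B n - B (n-s))"
    using shell[OF assms] unfolding K_def .
  have "measure M (B (n+s) - B (n-s)) = measure M (B (n+s) - B n) + measure M (B n - B (n-s))"
    using Bdiff[of "n-s" "n+s"] Bdiff[of n "n+s"] Bdiff[of "n-s" n] by simp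
  then have "\<theta> * measure M (B (n+s) - B (n-s)) = K / (K+1) * (measure M (B (n+s) - B n) + measure M (B n - B (n-s)))"
    unfolding \<theta>_def K_def by simp
  also have "\<dots> \<ge> measure M (B (n+s) - B n)"
    using a K by (simp add: field_simps)
  finally show ?thesis .
qed

lemma iter:
  "3 \<le> s \<Longrightarrow> 2^k * s \<le> n + s \<Longrightarrow> measure M (B (n+s) - B n) \<le> \<theta>^k * measure M (B (n+s))"
proof (induction k arbitrary: n s)
  case 0
  then show ?case using Bdiff[of n "n+s"] by simp
next
  case (Suc k)
  have "2 * s \<le> 2^(Suc k) * s" using Suc.prems by simp
  then have sn: "s \<le> n" using Suc.prems by linarith
  have "measure M (B (n+s) - B n) \<le> \<theta> * measure M (B (n+s) - B (n-s))"
    by (rule shell2[OF Suc.prems(1) sn])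
  also have "measure M (B (n+s) - B (n-s)) = measure M (B ((n-s) + 2* s) - B (n-s))"
    using sn by (simp add: algebra_simps)
  also have "\<dots> \<le> \<theta>^k * measure M (B ((n-s) + 2* s))"
    using Suc.prems sn by (intro Suc.IH) (auto simp: algebra_simps)
  also have "B ((n-s) + 2* s) = B (n+s)" using sn by (simp add: algebra_simps)
  finally show ?case using theta_pos by (simp add: mult_left_mono)
qed

lemma ex_log2: "1 \<le> (m::nat) \<Longrightarrow> \<exists>k. 2^k \<le> m \<and> m < 2^(Suc k)"
proof -
  assume m: "1 \<le> m"
  have P0: "2^0 \<le> m" using m by simp
  have bnd: "\<forall>k. 2^k \<le> m \<longrightarrow> k \<le> m"
    using less_exp[of ] by (meson dual_order.trans less_imp_le_nat)
  obtain k where k: "2^k \<le> m" "\<And>k'. 2^k' \<le> m \<Longrightarrow> k' \<le> k"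
    using Nat.ex_has_greatest_nat[of "\<lambda>k. 2^k \<le> m", OF P0 bnd] by blast
  have "\<not> 2^(Suc k) \<le> m" using k(2)[of "Suc k"] by auto
  then show ?thesis using k(1) by auto
qed

definition "\<delta> = - log 2 \<theta>"

lemma delta_pos: "\<delta> > 0"
  unfolding \<delta>_def using theta_pos theta_less1 by simp

lemma theta_pow: "\<theta>^k = (2^k) powr (-\<delta>)"
proof -
  have "\<theta> = 2 powr (-\<delta>)" unfolding \<delta>_def using theta_pos by simp
  then have "\<theta>^k = (2 powr (-\<delta>))^k" by simp
  also have "\<dots> = (2^k) powr (-\<delta>)"
    by (simp add: powr_realpow[symmetric] powr_powr mult.commute)
  finally show ?thesis .
qed

lemma main_bound:
  assumes s3: "3 \<le> s"
  shows "\<exists>C>0. \<forall>n::nat. n \<ge> 1 \<longrightarrow>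
     measure M (B (n+s) - B n) \<le> C * real n powr (-\<delta>) * measure M (B n)"
proof (intro exI[of _ "(2 * real s) powr \<delta> * C0^s"] conjI allI impI)
  show "0 < (2 * real s) powr \<delta> * C0^s" using s3 C0_ge1 by simp
  fix n :: nat assume n1: "1 \<le> n"
  define m where "m = (n + s) div s"
  have m1: "1 \<le> m" unfolding m_def using s3 by (simp add: div_greater_zero_iff Suc_le_eq)
  obtain k where k: "2^k \<le> m" "m < 2^(Suc k)" using ex_log2[OF m1] by blast
  have "2^k * s \<le> m * s" using k(1) by simp
  also have "m * s \<le> n + s" unfolding m_def by (simp add: div_times_less_eq_dividend)
  finally have ks: "2^k * s \<le> n + s" .
  have "n + s < (m + 1) * s" unfolding m_def using s3
    by (metis add.commute div_mult_mod_eq mod_less_divisor mult_Suc nat_add_left_cancel_less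
        not_gr_zero not_numeral_le_zero plus_1_eq_Suc)
  also have "(m+1) * s \<le> 2^(Suc k) * s" using k(2) by (intro mult_right_mono) auto
  finally have "n < 2^(Suc k) * s" by simp
  then have "real n < real (2^(Suc k) * s)" by (simp only: of_nat_less_iff)
  then have "real n < 2^k * (2 * real s)" by simp
  then have nk: "real n / (2 * real s) < 2^k" using s3
    by (simp add: divide_less_eq)
  have npos: "0 < real n / (2 * real s)" using n1 s3 by simp
  have "\<theta>^k = (2^k) powr (-\<delta>)" by (rule theta_pow)
  also have "\<dots> \<le> (real n / (2 * real s)) powr (-\<delta>)"
    using nk npos delta_pos by (intro powr_mono2') auto
  also have "\<dots> = (2 * real s) powr \<delta> * real n powr (-\<delta>)"
    using n1 s3 by (simp add: powr_divide powr_minus field_simps)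
  finally have th: "\<theta>^k \<le> (2 * real s) powr \<delta> * real n powr (-\<delta>)" .
  have "n + s \<le> 2^s * n"
  proof -
    have "n + s \<le> n * (1 + s)" using n1 by (simp add: algebra_simps)
    also have "\<dots> \<le> n * 2^s" using less_exp[of s] by (intro mult_left_mono) (auto simp: Suc_le_eq)
    finally show ?thesis by (simp add: mult.commute)
  qed
  then have bb: "measure M (B (n+s)) \<le> C0^s * measure M (B n)" by (rule dbl_pow[OF n1])
  have "measure M (B (n+s) - B n) \<le> \<theta>^k * measure M (B (n+s))" by (rule iter[OF s3 ks])
  also have "\<dots> \<le> ((2 * real s) powr \<delta> * real n powr (-\<delta>)) * (C0^s * measure M (B n))"
    using th bb theta_pos by (intro mult_mono) auto
  finally show "measure M (B (n+s) - B n) \<le> (2 * real s) powr \<delta> * C0^s * real n powr (-\<delta>) * measure M (B n)"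
    by (simp add: algebra_simps)
qed

lemma part1: "\<exists>\<delta>>0. \<exists>C>0. \<forall>n::nat. n \<ge> 1 \<longrightarrow>
            measure M (B (n+1) - B n) \<le> C * real n powr (-\<delta>) * measure M (B n)"
proof -
  obtain C where C: "C > 0" "\<And>n. n \<ge> 1 \<Longrightarrow> measure M (B (n+3) - B n) \<le> C * real n powr (-\<delta>) * measure M (B n)"
    using main_bound[of 3] by auto
  have "measure M (B (n+1) - B n) \<le> C * real n powr (-\<delta>) * measure M (B n)" if "n \<ge> 1" for n
  proof -
    have f: "B (n+3) - B n \<in> fmeasurable M" using fmeasurableI2[OF B_fmeas[of "n+3"]] B_sets by blast
    have sb: "B (n+1) - B n \<subseteq> B (n+3) - B n" using B_mono[of "n+1" "n+3"] by (simp add: Diff_mono)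
    have ss: "B (n+1) - B n \<in> sets M" using B_sets[of "n+1"] B_sets[of n] by (rule sets.Diff)
    have "measure M (B (n+1) - B n) \<le> measure M (B (n+3) - B n)"
      by (rule measure_mono_fmeasurable[OF sb ss f])
    then show ?thesis using C(2)[OF that] by linarith
  qed
  then show ?thesis using delta_pos C(1) by blast
qed

lemma part2: "((\<lambda>n. measure M (sym_diff ((\<lambda>x. x + g) ` B n) (B n)) / measure M (B n)) \<longlonglongrightarrow> 0)"
proof -
  define s where "s = max 3 (l g)"
  have s3: "3 \<le> s" and sg: "l g \<le> s" unfolding s_def by auto
  obtain C where C: "C > 0" "\<And>n. n \<ge> 1 \<Longrightarrow> measure M (B (n+s) - B n) \<le> C * real n powr (-\<delta>) * measure M (B n)"
    using main_bound[OF s3] by auto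
  define D where "D = C * (1 + 2 powr \<delta>)"
  have bound: "measure M (sym_diff ((\<lambda>x. x + g) ` B n) (B n)) / measure M (B n) \<le> D * real n powr (-\<delta>)"
    if n2: "n \<ge> 2 * s" for n
  proof -
    define Bg where "Bg = (\<lambda>x. x + g) ` B n"
    have n1: "n \<ge> 1" "n - s \<ge> 1" using n2 s3 by auto
    have Bg_sets: "Bg \<in> sets M" unfolding Bg_def by (rule compact_sets[OF compact_right[OF compact_B]])
    have Bpos: "measure M (B n) > 0" using B_pos n1 by simp
    have s1: "Bg - B n \<subseteq> B (n+s) - B n"
    proof
      fix z assume "z \<in> Bg - B n"
      then obtain y where y: "y \<in> B n" "z = y + g" "z \<notin> B n" unfolding Bg_def by auto
      have "l z \<le> l y + l g" using y(2) l_add by simp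
      then have "l z \<le> n + s" using y(1) sg in_B_iff by fastforce
      then show "z \<in> B (n+s) - B n" using y(3) in_B_iff by simp
    qed
    have s2: "B n - Bg \<subseteq> B ((n-s) + s) - B (n-s)"
    proof
      fix z assume z: "z \<in> B n - Bg"
      have "z \<notin> B (n-s)"
      proof
        assume "z \<in> B (n-s)"
        then have "l (z + -g) \<le> n" using l_add[of z "-g"] sg in_B_iff n2 by fastforce
        then have "z + -g \<in> B n" using in_B_iff by simp
        moreover have "z = (z + -g) + g" by (simp add: add.assoc)
        ultimately have "z \<in> Bg" unfolding Bg_def by blast
        then show False using z by blast
      qed
      then show "z \<in> B ((n-s) + s) - B (n-s)" using z n2 by simp
    qed
    have f1: "B (n+s) - B n \<in> fmeasurable M" using fmeasurableI2[OF B_fmeas[of "n+s"]] B_sets by blast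
    have f2: "B ((n-s)+s) - B (n-s) \<in> fmeasurable M" using fmeasurableI2[OF B_fmeas[of "(n-s)+s"]] B_sets by blast
    have "measure M (sym_diff Bg (B n)) \<le> measure M (Bg - B n) + measure M (B n - Bg)"
      unfolding sym_diff_def using Bg_sets B_sets by (intro measure_Un_le) auto
    also have "measure M (Bg - B n) \<le> measure M (B (n+s) - B n)"
      using Bg_sets B_sets by (intro measure_mono_fmeasurable[OF s1 _ f1]) auto
    also have "\<dots> \<le> C * real n powr (-\<delta>) * measure M (B n)" by (rule C(2)[OF n1(1)])
    also have "measure M (B n - Bg) \<le> measure M (B ((n-s)+s) - B (n-s))"
      using Bg_sets B_sets by (intro measure_mono_fmeasurable[OF s2 _ f2]) auto
    also have "\<dots> \<le> C * real (n-s) powr (-\<delta>) * measure M (B (n-s))" by (rule C(2)[OF n1(2)])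
    also have "\<dots> \<le> C * (2 powr \<delta> * real n powr (-\<delta>)) * measure M (B n)"
    proof -
      have h: "real n / 2 \<le> real (n - s)" using n2 by linarith
      have "real (n-s) powr (-\<delta>) \<le> (real n / 2) powr (-\<delta>)"
        using h n1 delta_pos by (intro powr_mono2') auto
      also have "\<dots> = 2 powr \<delta> * real n powr (-\<delta>)"
        using n1 by (simp add: powr_divide powr_minus field_simps)
      finally have a: "real (n-s) powr (-\<delta>) \<le> 2 powr \<delta> * real n powr (-\<delta>)" .
      have b: "measure M (B (n-s)) \<le> measure M (B n)" by (rule B_measure_mono) simp
      show ?thesis using a b C(1) by (intro mult_mono mult_left_mono) auto
    qed
    finally have "measure M (sym_diff Bg (B n)) \<le> D * real n powr (-\<delta>) * measure M (B n)"
      unfolding D_def by (simp add: algebra_simps)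
    then show ?thesis unfolding Bg_def using Bpos by (simp add: divide_le_eq)
  qed
  have lim: "(\<lambda>n. D * real n powr (-\<delta>)) \<longlonglongrightarrow> 0"
  proof -
    have "- \<delta> < 0" using delta_pos by simp
    from tendsto_mult_right_zero[OF tendsto_neg_powr[OF this filterlim_real_sequentially]]
    show ?thesis .
  qed
  show ?thesis
  proof (rule tendsto_sandwich[OF _ _ tendsto_const lim])
    show "\<forall>\<^sub>F n in sequentially. 0 \<le> measure M (sym_diff ((\<lambda>x. x + g) ` B n) (B n)) / measure M (B n)"
      by simp
    show "\<forall>\<^sub>F n in sequentially. measure M (sym_diff ((\<lambda>x. x + g) ` B n) (B n)) / measure M (B n) \<le> D * real n powr (-\<delta>)"
      using bound unfolding eventually_sequentially by blast
  qed
qed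

end

theorem theorem4p14:
  fixes M :: "'a::{group_add, t2_space, second_countable_topology} measure"
    and V :: "'a set" and C0 :: real
  assumes "topological_group TYPE('a)"
    and "locally_compact_space_type TYPE('a)"
    and "left_haar_measure M"
    and "compact V" and "uminus ` V = V" and "0 \<in> interior V"
    and "(\<Union>n. setpow V n) = UNIV"
    and "\<forall>n::nat. n \<ge> 1 \<longrightarrow> measure M (setpow V (2*n)) \<le> C0 * measure M (setpow V n)"
  shows "(\<exists>\<delta>>0. \<exists>C>0. \<forall>n::nat. n \<ge> 1 \<longrightarrow>
            measure M (setpow V (n+1) - setpow V n) \<le> C * real n powr (-\<delta>) * measure M (setpow V n))
       \<and> (\<forall>g. ((\<lambda>n. measure M (sym_diff ((\<lambda>x. x + g) ` setpow V n) (setpow V n))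
                      / measure M (setpow V n)) \<longlonglongrightarrow> 0))"
proof -
  interpret wg M V C0 using assms by (unfold_locales) auto
  show ?thesis using part1 part2 by blast
qed

end
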